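(* Consider the Task Scheduling Game defined in the context. Let $\mathbf{s}^*=(\mathbf{s}_1^*,\dots,\mathbf{s}_N^* )$ be any maximizer of $$\Phi(\mathbf{s}) = \sum_{k \in \mathcal{S}} \sum_{m=1}^{M_k(\mathbf{s})} \frac{V_k}{m} - \sum_{i \in \mathcal{N}} c_i^{\mathrm{ex}}(\mathbf{s}_i) - \sum_{i\in\mathcal{N}} c_i^{\mathrm{tr}}(\mathbf{s}_i)$$ over all strategy profiles $\mathbf{s}$ in which every $\mathbf{s}_i$ is feasible. Then $\mathbf{s}^*$ is a Nash equilibrium; in particular the game has at least one Nash equilibrium.
   Context: Task Scheduling Game. There is a finite set of users $\mathcal{N}=\{1,\dots,N\}$ and a finite set of tasks $\mathcal{S}=\{1,\dots,S\}$. Each task $k$ has a reward $V_k\in\mathbb{R}$, a target location $L_k$ (a point in the plane), and a valid time period $[T_k^{\dagger},T_k^{\ddagger}]$. Each user $i$ has an initial location $L_i$, a travelling speed $R_i>0$, a travelling cost per unit distance $\widetilde C_i\ge0$, a resource budget $C_i\ge 0$, and for each available task $k\in\mathcal{S}_i\subseteq\mathcal{S}$ an execution time $T_{i,k}\ge0$ and execution cost $C_{i,k}\ge 0$. A strategy of user $i$ is an ordered set $\mathbf{s}_i=\{k_i^1,\dots,k_i^{|\mathbf{s}_i|}\}$ of distinct tasks from $\mathcal{S}_i$. Let $D(a,b)=|L_a-L_b|$ denote the distance between locations, with $D(i,k)$ the distance from user $i$'s initial location to task $k$. The strategy $\mathbf{s}_i$ is feasible if (1) $\sum_{k\in\mathbf{s}_i}C_{i,k}\le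 C_i$, and (2) there exist times $T_i^1,\dots,T_i^{|\mathbf{s}_i|}$ with $T_{k_i^j}^{\dagger}\le T_i^j\le T_{k_i^j}^{\ddagger}$ for all $j$, $T_i^1\ge D(i,k_i^1)/R_i$, and $T_i^j\ge T_i^{j-1}+T_{i,k_i^{j-1}}+D(k_i^{j-1},k_i^j)/R_i$ for $j=2,\dots,|\mathbf{s}_i|$. For a profile $\mathbf{s}$, $M_k(\mathbf{s})=\sum_{i\in\mathcal{N}}\mathbf{1}_{(k\in\mathbf{s}_i)}$. Execution cost: $c_i^{\mathrm{ex}}(\mathbf{s}_i)=\sum_{k\in\mathbf{s}_i}C_{i,k}$; travelling cost: $c_i^{\mathrm{tr}}(\mathbf{s}_i)=\sum_{j=1}^{|\mathbf{s}_i|}D(k_i^{j-1},k_i^j)\widetilde C_i$, where $k_i^0$ denotes user $i$'s initial location. Payoff: $u_i(\mathbf{s}_i,\mathbf{s}_{-i})=\sum_{k\in\mathbf{s}_i}V_k/M_k(\mathbf{s})-c_i^{\mathrm{ex}}(\mathbf{s}_i)-c_i^{\mathrm{tr}}(\mathbf{s}_i)$. A profile $\mathbf{s}^*$ of feasible strategies is a Nash equilibrium if for every user $i$, $\mathbf{s}_i^*$ maximizes $u_i(\mathbf{s}_i,\mathbf{s}_{-i}^* )$ over all feasible strategies $\mathbf{s}_i$ of user $i$. *)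

theory Defs
  imports "HOL-Analysis.Analysis"
begin

text \<open>A strategy is a list (ordered set) of tasks.\<close>

record ('u, 't) tsg =
  reward   :: "'t \<Rightarrow> real"
  tloc     :: "'t \<Rightarrow> real^2"
  tstart   :: "'t \<Rightarrow> real"
  tend     :: "'t \<Rightarrow> real"
  uloc     :: "'u \<Rightarrow> real^2"
  speed    :: "'u \<Rightarrow> real"
  trcost   :: "'u \<Rightarrow> real"
  budget   :: "'u \<Rightarrow> real"
  avail    :: "'u \<Rightarrow> 't set"
  extime   :: "'u \<Rightarrow> 't \<Rightarrow> real"
  excost   :: "'u \<Rightarrow> 't \<Rightarrow> real"

definition valid_game :: "('u, 't) tsg \<Rightarrow> bool" where
  "valid_game G \<longleftrightarrow>
     (\<forall>i. speed G i > 0 \<and> trcost G i \<ge> 0 \<and> budget G i \<ge> 0) \<and>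
     (\<forall>i k. k \<in> avail G i \<longrightarrow> extime G i k \<ge> 0 \<and> excost G i k \<ge> 0)"

definition feasible :: "('u, 't) tsg \<Rightarrow> 'u \<Rightarrow> 't list \<Rightarrow> bool" where
  "feasible G i s \<longleftrightarrow>
     distinct s \<and> set s \<subseteq> avail G i \<and>
     (\<Sum>k\<in>set s. excost G i k) \<le> budget G i \<and>
     (\<exists>T :: real list. length T = length s \<and>
        (\<forall>j<length s. tstart G (s ! j) \<le> T ! j \<and> T ! j \<le> tend G (s ! j)) \<and>
        (s \<noteq> [] \<longrightarrow> T ! 0 \<ge> dist (uloc G i) (tloc G (s ! 0)) / speed G i) \<and>
        (\<forall>j. 0 < j \<and> j < length s \<longrightarrow>
           T ! j \<ge> T ! (j - 1) + extime G i (s ! (j - 1))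
                    + dist (tloc G (s ! (j - 1))) (tloc G (s ! j)) / speed G i))"

definition users_on :: "('u::finite \<Rightarrow> 't list) \<Rightarrow> 't \<Rightarrow> nat" where
  "users_on p k = card {i. k \<in> set (p i)}"

definition ex_cost :: "('u, 't) tsg \<Rightarrow> 'u \<Rightarrow> 't list \<Rightarrow> real" where
  "ex_cost G i s = (\<Sum>k\<in>set s. excost G i k)"

definition tr_cost :: "('u, 't) tsg \<Rightarrow> 'u \<Rightarrow> 't list \<Rightarrow> real" where
  "tr_cost G i s = (\<Sum>j<length s.
      dist (if j = 0 then uloc G i else tloc G (s ! (j - 1))) (tloc G (s ! j)) * trcost G i)"

definition payoff :: "('u::finite, 't) tsg \<Rightarrow> ('u \<Rightarrow> 't list) \<Rightarrow> 'u \<Rightarrow> real" where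
  "payoff G p i = (\<Sum>k\<in>set (p i). reward G k / real (users_on p k))
                   - ex_cost G i (p i) - tr_cost G i (p i)"

definition potential :: "('u::finite, 't::finite) tsg \<Rightarrow> ('u \<Rightarrow> 't list) \<Rightarrow> real" where
  "potential G p = (\<Sum>k\<in>UNIV. \<Sum>m = 1..users_on p k. reward G k / real m)
                   - (\<Sum>i\<in>UNIV. ex_cost G i (p i)) - (\<Sum>i\<in>UNIV. tr_cost G i (p i))"

definition feasible_profile :: "('u, 't) tsg \<Rightarrow> ('u \<Rightarrow> 't list) \<Rightarrow> bool" where
  "feasible_profile G p \<longleftrightarrow> (\<forall>i. feasible G i (p i))"

definition nash_eq :: "('u::finite, 't) tsg \<Rightarrow> ('u \<Rightarrow> 't list) \<Rightarrow> bool" where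
  "nash_eq G p \<longleftrightarrow> feasible_profile G p \<and>
     (\<forall>i s. feasible G i s \<longrightarrow> payoff G (p(i := s)) i \<le> payoff G p i)"

end

theory Submission
  imports Defs
begin

lemma users_on_split:
  fixes p :: "'u::finite \<Rightarrow> 't list"
  shows "users_on p k = card {j. j \<noteq> i \<and> k \<in> set (p j)} + (if k \<in> set (p i) then 1 else 0)"
proof (cases "k \<in> set (p i)")
  case True
  have "{j. k \<in> set (p j)} = insert i {j. j \<noteq> i \<and> k \<in> set (p j)}" using True by auto
  then show ?thesis using True unfolding users_on_def by simp
next
  case False
  have "{j. k \<in> set (p j)} = {j. j \<noteq> i \<and> k \<in> set (p j)}" using False by auto
  then show ?thesis using False unfolding users_on_def by simp
qed

lemma harm_step:
  "(\<Sum>m = 1..Suc c. (V::real) / real m) = (\<Sum>m = 1..c. V / real m) + V / real (Suc c)"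
  by simp

lemma pot_diff:
  fixes G :: "('u::finite, 't::finite) tsg" and p :: "'u \<Rightarrow> 't list"
  shows "potential G (p(i := s)) - potential G p = payoff G (p(i := s)) i - payoff G p i"
proof -
  define q where "q = p(i := s)"
  define H where "H k n = (\<Sum>m = 1..n. reward G k / real m)" for k n
  have qi: "q i = s" and qj: "\<And>j. j \<noteq> i \<Longrightarrow> q j = p j" by (auto simp: q_def)
  have key: "H k (users_on q k) - H k (users_on p k) =
     (if k \<in> set s then reward G k / real (users_on q k) else 0)
     - (if k \<in> set (p i) then reward G k / real (users_on p k) else 0)" for k
  proof -
    define c where "c = card {j. j \<noteq> i \<and> k \<in> set (p j)}"
    have cq: "{j. j \<noteq> i \<and> k \<in> set (q j)} = {j. j \<noteq> i \<and> k \<in> set (p j)}" using qj by auto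
    have Mp: "users_on p k = c + (if k \<in> set (p i) then 1 else 0)"
      using users_on_split[of p k i] c_def by simp
    have Mq: "users_on q k = c + (if k \<in> set s then 1 else 0)"
      using users_on_split[of q k i] c_def cq qi by simp
    show ?thesis using Mp Mq by (auto simp: H_def)
  qed
  have S1: "(\<Sum>k\<in>UNIV. H k (users_on q k)) - (\<Sum>k\<in>UNIV. H k (users_on p k))
     = (\<Sum>k\<in>set s. reward G k / real (users_on q k)) - (\<Sum>k\<in>set (p i). reward G k / real (users_on p k))"
  proof -
    have "(\<Sum>k\<in>UNIV. H k (users_on q k)) - (\<Sum>k\<in>UNIV. H k (users_on p k))
        = (\<Sum>k\<in>UNIV. H k (users_on q k) - H k (users_on p k))" by (simp add: sum_subtractf)
    also have "\<dots> = (\<Sum>k\<in>UNIV. (if k \<in> set s then reward G k / real (users_on q k) else 0))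
       - (\<Sum>k\<in>UNIV. (if k \<in> set (p i) then reward G k / real (users_on p k) else 0))"
      by (simp add: key sum_subtractf)
    also have "\<dots> = (\<Sum>k\<in>set s. reward G k / real (users_on q k)) - (\<Sum>k\<in>set (p i). reward G k / real (users_on p k))"
      by (simp add: sum.If_cases Int_absorb1)
    finally show ?thesis .
  qed
  have S2: "(\<Sum>j\<in>UNIV. f j (q j)) - (\<Sum>j\<in>UNIV. f j (p j)) = f i s - f i (p i)"
    for f :: "'u \<Rightarrow> 't list \<Rightarrow> real"
  proof -
    have "(\<Sum>j\<in>UNIV. f j (q j)) - (\<Sum>j\<in>UNIV. f j (p j)) = (\<Sum>j\<in>UNIV. f j (q j) - f j (p j))"
      by (simp add: sum_subtractf)
    also have "\<dots> = (\<Sum>j\<in>UNIV. if j = i then f i s - f i (p i) else 0)"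
      by (rule sum.cong) (auto simp: q_def)
    also have "\<dots> = f i s - f i (p i)" by simp
    finally show ?thesis .
  qed
  have "potential G q - potential G p =
      ((\<Sum>k\<in>UNIV. H k (users_on q k)) - (\<Sum>k\<in>UNIV. H k (users_on p k)))
      - ((\<Sum>j\<in>UNIV. ex_cost G j (q j)) - (\<Sum>j\<in>UNIV. ex_cost G j (p j)))
      - ((\<Sum>j\<in>UNIV. tr_cost G j (q j)) - (\<Sum>j\<in>UNIV. tr_cost G j (p j)))"
    unfolding potential_def H_def by simp
  also have "\<dots> = payoff G q i - payoff G p i"
    unfolding S1 S2[of "ex_cost G"] S2[of "tr_cost G"] payoff_def qi by simp
  finally show ?thesis unfolding q_def .
qed

theorem lemma3:
  fixes G :: "('u::finite, 't::finite) tsg" and p :: "'u \<Rightarrow> 't list"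
  assumes "valid_game G"
    and "feasible_profile G p"
    and "\<forall>q. feasible_profile G q \<longrightarrow> potential G q \<le> potential G p"
  shows "nash_eq G p \<and> (\<exists>q. nash_eq G q)"
proof -
  have "nash_eq G p"
    unfolding nash_eq_def
  proof (intro conjI allI impI)
    show "feasible_profile G p" by fact
    fix i s assume f: "feasible G i s"
    have "feasible_profile G (p(i := s))"
      using assms(2) f by (auto simp: feasible_profile_def)
    then have "potential G (p(i := s)) \<le> potential G p" using assms(3) by blast
    then show "payoff G (p(i := s)) i \<le> payoff G p i" using pot_diff[of G p i s] by linarith
  qed
  then show ?thesis by blast
qed

end
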